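(* A function quasi-norm $\rho$ over a $\sigma$-finite measure space $(\Omega,\Sigma,\mu)$ is locally dominating if and only if $\lim_{t\to0^+}\Phi[E,\rho](t)=0$ for every $E\in\Sigma$ with $\mu(E)<\infty$, where $\Phi[E,\rho](t)=\sup\{\rho(\chi_A):A\in\Sigma,\ A\subseteq E,\ \mu(A)\le t\}$.
   Context: $L_0^+(\mu)$: measurable functions $\Omega\to[0,\infty]$ modulo a.e. equality. A function quasi-norm is $\rho\colon L_0^+(\mu)\to[0,\infty]$ with (F1) $\rho(tf)=t\rho(f)$, $t\ge0$; (F2) $f\le g$ a.e. $\Rightarrow\rho(f)\le\rho(g)$; (F3) $\rho(\chi_E)<\infty$ if $\mu(E)<\infty$; (F4) for all $E$ with $\mu(E)<\infty$ and $\varepsilon>0$ there is $\delta>0$ with $\mu(A)\le\varepsilon$ whenever $A\subseteq E$ measurable and $\rho(\chi_A)\le\delta$; (F5) $\rho(f+g)\le\kappa(\rho(f)+\rho(g))$. $f\in L_0^+(\mu)$ with $\rho(f)<\infty$ is dominating if $\lim_n\rho(f_n)=0$ for every non-increasing $(f_n)$ in $L_0^+(\mu)$ with $f_1\le f$ and $\lim_nf_n=0$. $\rho$ is locally dominating if $\chi_E$ is dominating for every $E\in\Sigma$ with $\mu(E)<\infty$. *)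

theory Defs
  imports "HOL-Analysis.Analysis"
begin

text \<open>Elements of L_0^+(mu) are represented by Borel measurable functions into ennreal;
  the quasi-norm is only constrained on such functions, and (F2) with a.e. ordering
  makes it invariant under a.e. equality.\<close>

definition function_quasi_norm :: "'a measure \<Rightarrow> (('a \<Rightarrow> ennreal) \<Rightarrow> ennreal) \<Rightarrow> bool" where
  "function_quasi_norm M \<rho> \<longleftrightarrow>
     \<comment> \<open>(F1)\<close>
     (\<forall>f \<in> borel_measurable M. \<forall>t::real. t \<ge> 0 \<longrightarrow>
        \<rho> (\<lambda>x. ennreal t * f x) = ennreal t * \<rho> f) \<and>
     \<comment> \<open>(F2)\<close>
     (\<forall>f \<in> borel_measurable M. \<forall>g \<in> borel_measurable M.
        (AE x in M. f x \<le> g x) \<longrightarrow> \<rho> f \<le> \<rho> g) \<and>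
     \<comment> \<open>(F3)\<close>
     (\<forall>E \<in> sets M. emeasure M E < \<infinity> \<longrightarrow> \<rho> (indicator E) < \<infinity>) \<and>
     \<comment> \<open>(F4)\<close>
     (\<forall>E \<in> sets M. emeasure M E < \<infinity> \<longrightarrow>
        (\<forall>\<epsilon>::real. \<epsilon> > 0 \<longrightarrow> (\<exists>\<delta>::real. \<delta> > 0 \<and>
           (\<forall>A \<in> sets M. A \<subseteq> E \<and> \<rho> (indicator A) \<le> ennreal \<delta> \<longrightarrow>
              emeasure M A \<le> ennreal \<epsilon>)))) \<and>
     \<comment> \<open>(F5)\<close>
     (\<exists>\<kappa>::real. \<kappa> \<ge> 1 \<and>
        (\<forall>f \<in> borel_measurable M. \<forall>g \<in> borel_measurable M.
           \<rho> (\<lambda>x. f x + g x) \<le> ennreal \<kappa> * (\<rho> f + \<rho> g)))"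

definition dominating :: "'a measure \<Rightarrow> (('a \<Rightarrow> ennreal) \<Rightarrow> ennreal) \<Rightarrow> ('a \<Rightarrow> ennreal) \<Rightarrow> bool" where
  "dominating M \<rho> f \<longleftrightarrow> f \<in> borel_measurable M \<and> \<rho> f < \<infinity> \<and>
     (\<forall>fs :: nat \<Rightarrow> 'a \<Rightarrow> ennreal.
        (\<forall>n. fs n \<in> borel_measurable M) \<and>
        (AE x in M. \<forall>n. fs (Suc n) x \<le> fs n x) \<and>
        (AE x in M. fs 0 x \<le> f x) \<and>
        (AE x in M. (\<lambda>n. fs n x) \<longlonglongrightarrow> 0)
        \<longrightarrow> (\<lambda>n. \<rho> (fs n)) \<longlonglongrightarrow> 0)"

definition locally_dominating :: "'a measure \<Rightarrow> (('a \<Rightarrow> ennreal) \<Rightarrow> ennreal) \<Rightarrow> bool" where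
  "locally_dominating M \<rho> \<longleftrightarrow>
     (\<forall>E \<in> sets M. emeasure M E < \<infinity> \<longrightarrow> dominating M \<rho> (indicator E))"

definition Phi :: "'a measure \<Rightarrow> 'a set \<Rightarrow> (('a \<Rightarrow> ennreal) \<Rightarrow> ennreal) \<Rightarrow> real \<Rightarrow> ennreal" where
  "Phi M E \<rho> t = (SUP A \<in> {A \<in> sets M. A \<subseteq> E \<and> emeasure M A \<le> ennreal t}. \<rho> (indicator A))"

end

theory Submission imports Defs begin

lemma qn_F1: "function_quasi_norm M \<rho> \<Longrightarrow> f \<in> borel_measurable M \<Longrightarrow> t \<ge> 0 \<Longrightarrow> \<rho> (\<lambda>x. ennreal t * f x) = ennreal t * \<rho> f"
  unfolding function_quasi_norm_def by (drule conjunct1) blast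
lemma qn_F2: "function_quasi_norm M \<rho> \<Longrightarrow> f \<in> borel_measurable M \<Longrightarrow> g \<in> borel_measurable M \<Longrightarrow> (AE x in M. f x \<le> g x) \<Longrightarrow> \<rho> f \<le> \<rho> g"
  unfolding function_quasi_norm_def by (drule conjunct2, drule conjunct1) blast
lemma qn_F3: "function_quasi_norm M \<rho> \<Longrightarrow> E \<in> sets M \<Longrightarrow> emeasure M E < \<infinity> \<Longrightarrow> \<rho> (indicator E) < \<infinity>"
  unfolding function_quasi_norm_def by (drule conjunct2, drule conjunct2, drule conjunct1) blast
lemma qn_F5: "function_quasi_norm M \<rho> \<Longrightarrow> \<exists>\<kappa>::real. \<kappa> \<ge> 1 \<and>
        (\<forall>f \<in> borel_measurable M. \<forall>g \<in> borel_measurable M.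
           \<rho> (\<lambda>x. f x + g x) \<le> ennreal \<kappa> * (\<rho> f + \<rho> g))"
  unfolding function_quasi_norm_def by (drule conjunct2, drule conjunct2, drule conjunct2, drule conjunct2) assumption


lemma Phi_mono: "s \<le> t \<Longrightarrow> Phi M E \<rho> s \<le> Phi M E \<rho> t"
  unfolding Phi_def
  by (rule SUP_subset_mono) (auto intro: order_trans ennreal_leI)

lemma tendsto_0_ennrealI:
  assumes "\<And>a::ennreal. 0 < a \<Longrightarrow> eventually (\<lambda>x. f x < a) F"
  shows "(f \<longlongrightarrow> 0) F"
  by (rule order_tendstoI) (auto intro: assms)

lemma fwd:
  assumes Q: "function_quasi_norm M \<rho>" and E: "E \<in> sets M" "emeasure M E < \<infinity>"
    and D: "dominating M \<rho> (indicator E)"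
  shows "(Phi M E \<rho> \<longlongrightarrow> 0) (at_right 0)"
proof (rule tendsto_0_ennrealI)
  fix a :: ennreal assume a: "0 < a"
  note F2 = qn_F2[OF Q]
  have "\<exists>t>0. Phi M E \<rho> t < a"
  proof (rule ccontr)
    assume na: "\<not> (\<exists>t>0. Phi M E \<rho> t < a)"
    have ge: "a \<le> Phi M E \<rho> t" if "t > 0" for t using na that not_less by blast
    obtain b where b: "0 < b" "b < a" using dense[OF a] by blast
    have "\<forall>n. \<exists>A. A \<in> sets M \<and> A \<subseteq> E \<and> emeasure M A \<le> ennreal ((1/2)^n) \<and> b < \<rho> (indicator A)"
    proof
      fix n :: nat
      have "b < Phi M E \<rho> ((1/2)^n)" using ge[of "(1/2)^n"] b by simp
      thus "\<exists>A. A \<in> sets M \<and> A \<subseteq> E \<and> emeasure M A \<le> ennreal ((1/2)^n) \<and> b < \<rho> (indicator A)"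
        unfolding Phi_def less_SUP_iff by blast
    qed
    then obtain A where A: "\<And>n. A n \<in> sets M" "\<And>n. A n \<subseteq> E"
      "\<And>n. emeasure M (A n) \<le> ennreal ((1/2)^n)" "\<And>n. b < \<rho> (indicator (A n))"
      by metis
    define B where "B n = (\<Union>i. A (i + n))" for n
    have Bs: "B n \<in> sets M" for n unfolding B_def using A(1) by auto
    have BE: "B n \<subseteq> E" for n unfolding B_def using A(2) by auto
    have Bdec: "B (Suc n) \<subseteq> B n" for n unfolding B_def
      proof fix x assume "x \<in> (\<Union>i. A (i + Suc n))" then obtain i where "x \<in> A (Suc i + n)" by auto thus "x \<in> (\<Union>i. A (i + n))" by blast qed
    have AB: "A n \<subseteq> B n" for n unfolding B_def by (auto intro!: exI[of _ 0])
    have Bm: "emeasure M (B n) \<le> ennreal (2 * (1/2)^n)" for n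
    proof -
      have "emeasure M (B n) \<le> (\<Sum>i. emeasure M (A (i + n)))"
        unfolding B_def by (rule emeasure_subadditive_countably) (use A(1) in auto)
      also have "\<dots> \<le> (\<Sum>i. ennreal ((1/2)^(i+n)))"
        by (intro suminf_le) (use A(3) in auto)
      also have "\<dots> = ennreal (\<Sum>i. (1/2)^(i+n))"
        by (rule suminf_ennreal2) (auto simp: power_add intro: summable_mult2 summable_geometric)
      also have "(\<Sum>i. (1/2::real)^(i+n)) = 2 * (1/2)^n"
        using suminf_mult2[OF summable_geometric[of "1/2::real"], of "(1/2)^n"] suminf_geometric[of "1/2::real"]
        by (simp add: power_add)
      finally show ?thesis .
    qed
    have N0: "emeasure M (\<Inter>n. B n) = 0"
    proof -
      have "(\<lambda>n. 2 * (1/2::real)^n) \<longlonglongrightarrow> 0"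
        by (intro tendsto_mult_right_zero LIMSEQ_power_zero) simp
      hence "(\<lambda>n. ennreal (2 * (1/2)^n)) \<longlonglongrightarrow> ennreal 0" by (rule tendsto_ennrealI)
      hence lim: "(\<lambda>n. ennreal (2 * (1/2)^n)) \<longlonglongrightarrow> 0" by (simp only: ennreal_0)
      have bnd: "emeasure M (\<Inter>n. B n) \<le> ennreal (2 * (1/2)^n)" for n
      proof -
        have "emeasure M (\<Inter>n. B n) \<le> emeasure M (B n)" by (rule emeasure_mono) (use Bs in auto)
        also have "\<dots> \<le> ennreal (2 * (1/2)^n)" by (rule Bm)
        finally show ?thesis .
      qed
      have "emeasure M (\<Inter>n. B n) \<le> 0"
        by (rule tendsto_le[OF trivial_limit_sequentially lim tendsto_const]) (rule always_eventually, rule allI, rule bnd)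
      thus ?thesis by simp
    qed
    have Nnull: "(\<Inter>n. B n) \<in> null_sets M" using N0 Bs by auto
    have "(\<lambda>n. \<rho> (indicator (B n))) \<longlonglongrightarrow> 0"
    proof (rule D[unfolded dominating_def, THEN conjunct2, THEN conjunct2, rule_format], intro conjI)
      show "\<forall>n. (indicator (B n) :: _ \<Rightarrow> ennreal) \<in> borel_measurable M" using Bs by auto
      show "AE x in M. \<forall>n. (indicator (B (Suc n)) x :: ennreal) \<le> indicator (B n) x"
        using Bdec by (auto intro!: AE_I2 split: split_indicator)
      show "AE x in M. (indicator (B 0) x :: ennreal) \<le> indicator E x"
        using BE by (auto intro!: AE_I2 split: split_indicator)
      show "AE x in M. (\<lambda>n. indicator (B n) x :: ennreal) \<longlonglongrightarrow> 0"
      proof (rule AE_I'[OF Nnull], rule subsetI)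
        fix x assume "x \<in> {x \<in> space M. \<not> (\<lambda>n. indicator (B n) x :: ennreal) \<longlonglongrightarrow> 0}"
        hence x: "x \<in> space M" and nl: "\<not> (\<lambda>n. indicator (B n) x :: ennreal) \<longlonglongrightarrow> 0" by auto
        show "x \<in> (\<Inter>n. B n)"
        proof (rule ccontr)
          assume "x \<notin> (\<Inter>n. B n)"
          then obtain m where m: "x \<notin> B m" by blast
          have "x \<notin> B n" if "m \<le> n" for n
            using lift_Suc_antimono_le[of B, OF Bdec that] m by blast
          hence "eventually (\<lambda>n. (indicator (B n) x :: ennreal) = 0) sequentially"
            unfolding eventually_sequentially by (intro exI[of _ m]) (auto simp: indicator_def)
          hence "(\<lambda>n. indicator (B n) x :: ennreal) \<longlonglongrightarrow> 0"
            by (rule tendsto_eventually)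
          with nl show False by simp
        qed
      qed
    qed
    hence "eventually (\<lambda>n. \<rho> (indicator (B n)) < b) sequentially"
      using b(1) order_tendstoD(2) by blast
    then obtain n where "\<rho> (indicator (B n)) < b" by (auto simp: eventually_sequentially)
    moreover have "\<rho> (indicator (A n)) \<le> \<rho> (indicator (B n))"
      using AB A(1) Bs by (intro F2) (auto intro!: AE_I2 split: split_indicator)
    ultimately show False using A(4)[of n] by simp
  qed
  then obtain t where t: "t > 0" "Phi M E \<rho> t < a" by blast
  show "eventually (\<lambda>s. Phi M E \<rho> s < a) (at_right 0)"
    unfolding eventually_at_right_field
  proof (intro exI[of _ t] conjI allI impI)
    show "0 < t" by (rule t(1))
    fix y :: real assume "0 < y" "y < t"
    hence "Phi M E \<rho> y \<le> Phi M E \<rho> t" by (intro Phi_mono) simp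
    thus "Phi M E \<rho> y < a" using t(2) by (rule le_less_trans)
  qed
qed

lemma bwd:
  assumes Q: "function_quasi_norm M \<rho>" and E: "E \<in> sets M" "emeasure M E < \<infinity>"
    and P: "(Phi M E \<rho> \<longlongrightarrow> 0) (at_right 0)"
  shows "dominating M \<rho> (indicator E)"
proof -
  note F1 = qn_F1[OF Q] and F2 = qn_F2[OF Q]
  have F3: "\<rho> (indicator E) < \<infinity>" using qn_F3[OF Q E] .
  obtain \<kappa> :: real where k1: "\<kappa> \<ge> 1" and F5: "\<And>f g. f \<in> borel_measurable M \<Longrightarrow> g \<in> borel_measurable M \<Longrightarrow>
           \<rho> (\<lambda>x. f x + g x) \<le> ennreal \<kappa> * (\<rho> f + \<rho> g)"
    using qn_F5[OF Q] by blast
  obtain r where r: "r \<ge> 0" "\<rho> (indicator E) = ennreal r" using F3 less_top_ennreal by auto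
  show ?thesis unfolding dominating_def
  proof (intro conjI allI impI)
    show "indicator E \<in> borel_measurable M" using E by simp
    show "\<rho> (indicator E) < \<infinity>" by (rule F3)
    fix fs :: "nat \<Rightarrow> 'a \<Rightarrow> ennreal"
    assume H: "(\<forall>n. fs n \<in> borel_measurable M) \<and>
        (AE x in M. \<forall>n. fs (Suc n) x \<le> fs n x) \<and>
        (AE x in M. fs 0 x \<le> indicator E x) \<and>
        (AE x in M. (\<lambda>n. fs n x) \<longlonglongrightarrow> 0)"
    have fsm[measurable]: "\<And>n. fs n \<in> borel_measurable M" using H by blast
    have le1: "AE x in M. \<forall>n. fs n x \<le> indicator E x"
      using H
    proof -
      have "AE x in M. \<forall>n. fs (Suc n) x \<le> fs n x" "AE x in M. fs 0 x \<le> indicator E x" using H by blast+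
      thus ?thesis
      proof eventually_elim
        case (elim x)
        show ?case using lift_Suc_antimono_le[of "\<lambda>n. fs n x" 0] elim by (meson order_trans zero_le)
      qed
    qed
    show "(\<lambda>n. \<rho> (fs n)) \<longlonglongrightarrow> 0"
    proof (rule tendsto_0_ennrealI)
      fix a :: ennreal assume a: "0 < a"
      obtain b where b: "0 < b" "b < a" using dense[OF a] by blast
      then obtain e where e: "e > 0" "b = ennreal e"
        proof - have "b < top" using b(2) top_greatest by (rule less_le_trans) then obtain e where "e \<ge> 0" "b = ennreal e" unfolding less_top_ennreal by blast with b(1) show ?thesis using that by simp qed
      define \<eta> where "\<eta> = e / (4 * \<kappa> * (r + 1))"
      define c where "c = e / (4 * \<kappa>)"
      have \<eta>0: "\<eta> > 0" unfolding \<eta>_def using e k1 r by auto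
      have c0: "c > 0" unfolding c_def using e k1 by auto
      have key: "\<kappa> * (\<eta> * r + c) \<le> e / 2"
      proof -
        have "\<eta> * r = c * (r / (r + 1))" unfolding \<eta>_def c_def using r by (simp add: field_simps)
        also have "\<dots> \<le> c * 1" using c0 r by (intro mult_left_mono) auto
        finally have "\<eta> * r \<le> c" by simp
        hence "\<kappa> * (\<eta> * r + c) \<le> \<kappa> * (c + c)" using k1 by (intro mult_left_mono) auto
        also have "\<kappa> * (c + c) = e / 2" unfolding c_def using k1 by simp
        finally show ?thesis .
      qed
      have "eventually (\<lambda>t. Phi M E \<rho> t < ennreal c) (at_right 0)"
        using order_tendstoD(2)[OF P] c0 by simp
      then obtain \<delta> where \<delta>: "\<delta> > 0" "\<And>y. 0 < y \<Longrightarrow> y < \<delta> \<Longrightarrow> Phi M E \<rho> y < ennreal c"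
        unfolding eventually_at_right_field by auto
      define t where "t = \<delta> / 2"
      have t: "t > 0" "Phi M E \<rho> t < ennreal c" using \<delta> unfolding t_def by auto
      define A where "A n = {x \<in> space M. x \<in> E \<and> ennreal \<eta> < fs n x}" for n
      have As[measurable]: "A n \<in> sets M" for n unfolding A_def using E by measurable
      define C where "C n = (\<Union>i. A (i + n))" for n
      have Cs: "C n \<in> sets M" for n unfolding C_def by auto
      have CE: "C n \<subseteq> E" for n unfolding C_def A_def by auto
      have Cdec: "decseq C"
      proof (rule decseq_SucI)
        fix n show "C (Suc n) \<subseteq> C n" unfolding C_def
        proof fix x assume "x \<in> (\<Union>i. A (i + Suc n))" then obtain i where "x \<in> A (Suc i + n)" by auto thus "x \<in> (\<Union>i. A (i + n))" by blast qed
      qed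
      have AC: "A n \<subseteq> C n" for n unfolding C_def by (auto intro!: exI[of _ 0])
      have lim: "(\<lambda>n. emeasure M (C n)) \<longlonglongrightarrow> emeasure M (\<Inter>n. C n)"
      proof (rule Lim_emeasure_decseq)
        show "range C \<subseteq> sets M" using Cs by auto
        show "decseq C" by (rule Cdec)
        fix i
        have "emeasure M (C i) < \<infinity>" using emeasure_mono[OF CE[of i] E(1)] E(2) by (rule le_less_trans)
        thus "emeasure M (C i) \<noteq> \<infinity>" by simp
      qed
      have "AE x in M. (\<lambda>n. fs n x) \<longlonglongrightarrow> 0" using H by blast
      then obtain N where N: "{x\<in>space M. \<not> (\<lambda>n. fs n x) \<longlonglongrightarrow> 0} \<subseteq> N" "emeasure M N = 0" "N \<in> sets M"
        by (rule AE_E)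
      have "(\<Inter>n. C n) \<subseteq> N"
      proof
        fix x assume x: "x \<in> (\<Inter>n. C n)"
        hence xs: "x \<in> space M" unfolding C_def A_def by auto
        have "\<not> (\<lambda>n. fs n x) \<longlonglongrightarrow> 0"
        proof
          assume "(\<lambda>n. fs n x) \<longlonglongrightarrow> 0"
          hence "eventually (\<lambda>n. fs n x < ennreal \<eta>) sequentially"
            using order_tendstoD(2)[OF \<open>(\<lambda>n. fs n x) \<longlonglongrightarrow> 0\<close>] \<eta>0 by simp
          then obtain m where m: "\<And>n. n \<ge> m \<Longrightarrow> fs n x < ennreal \<eta>" by (auto simp: eventually_sequentially)
          from x have "x \<in> C m" by blast
          then obtain i where "ennreal \<eta> < fs (i + m) x" unfolding C_def A_def by auto
          with m[of "i+m"] show False by simp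
        qed
        with xs N(1) show "x \<in> N" by blast
      qed
      hence "emeasure M (\<Inter>n. C n) = 0" using N emeasure_mono[of "\<Inter>n. C n" N M] by simp
      with lim have "(\<lambda>n. emeasure M (C n)) \<longlonglongrightarrow> 0" by simp
      hence ev: "eventually (\<lambda>n. emeasure M (C n) < ennreal t) sequentially"
        using order_tendstoD(2)[OF \<open>(\<lambda>n. emeasure M (C n)) \<longlonglongrightarrow> 0\<close>] t(1) by simp
      show "eventually (\<lambda>n. \<rho> (fs n) < a) sequentially"
        using ev
      proof eventually_elim
        case (elim n)
        have "emeasure M (A n) \<le> ennreal t"
          using emeasure_mono[OF AC[of n] Cs[of n]] elim by (meson less_imp_le order.trans)
        hence "A n \<in> {A \<in> sets M. A \<subseteq> E \<and> emeasure M A \<le> ennreal t}"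
          using As unfolding A_def by auto
        hence "\<rho> (indicator (A n)) \<le> Phi M E \<rho> t" unfolding Phi_def by (rule SUP_upper)
        with t have rA: "\<rho> (indicator (A n)) \<le> ennreal c" by simp
        have "\<rho> (fs n) \<le> \<rho> (\<lambda>x. ennreal \<eta> * indicator E x + indicator (A n) x)"
        proof (rule F2)
          show "fs n \<in> borel_measurable M" by simp
          show "(\<lambda>x. ennreal \<eta> * indicator E x + indicator (A n) x) \<in> borel_measurable M"
            using E by measurable
          show "AE x in M. fs n x \<le> ennreal \<eta> * indicator E x + indicator (A n) x"
            using AE_space le1
          proof eventually_elim
            case (elim x)
            show ?case
            proof (cases "x \<in> E")
              case True
              show ?thesis
              proof (cases "ennreal \<eta> < fs n x")
                case True
                with \<open>x \<in> E\<close> elim have "x \<in> A n" unfolding A_def by auto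
                thus ?thesis using elim(2)[rule_format, of n] \<open>x \<in> E\<close> by (simp add: add_increasing)
              next
                case False
                thus ?thesis using \<open>x \<in> E\<close> by (simp add: not_less add_increasing2)
              qed
            next
              case False
              thus ?thesis using elim(2)[rule_format, of n] by simp
            qed
          qed
        qed
        also have "\<dots> \<le> ennreal \<kappa> * (\<rho> (\<lambda>x. ennreal \<eta> * indicator E x) + \<rho> (indicator (A n)))"
          by (rule F5) (use E in auto)
        also have "\<rho> (\<lambda>x. ennreal \<eta> * indicator E x) = ennreal \<eta> * ennreal r"
          using F1[of "indicator E" \<eta>] E \<eta>0 r by simp
        also have "ennreal \<kappa> * (ennreal \<eta> * ennreal r + \<rho> (indicator (A n))) \<le> ennreal \<kappa> * (ennreal \<eta> * ennreal r + ennreal c)"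
          using rA by (intro mult_left_mono add_left_mono) simp_all
        also have "\<dots> = ennreal (\<kappa> * (\<eta> * r + c))"
        proof -
          have 1: "ennreal \<eta> * ennreal r = ennreal (\<eta> * r)" using \<eta>0 r by (intro ennreal_mult[symmetric]) auto
          have 2: "ennreal (\<eta> * r) + ennreal c = ennreal (\<eta> * r + c)" using \<eta>0 r c0 by (intro ennreal_plus[symmetric]) auto
          have 3: "ennreal \<kappa> * ennreal (\<eta> * r + c) = ennreal (\<kappa> * (\<eta> * r + c))" using k1 \<eta>0 r c0 by (intro ennreal_mult[symmetric]) auto
          show ?thesis unfolding 1 2 3 ..
        qed
        also have "\<dots> \<le> ennreal (e / 2)" using key by (rule ennreal_leI)
        also have "\<dots> < ennreal e" using e by (simp add: ennreal_lessI)
        finally show ?case using b e by simp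
      qed
    qed
  qed
qed

theorem corollary3p23:
  fixes M :: "'a measure" and \<rho> :: "('a \<Rightarrow> ennreal) \<Rightarrow> ennreal"
  assumes "sigma_finite_measure M"
    and "function_quasi_norm M \<rho>"
  shows "locally_dominating M \<rho> \<longleftrightarrow>
    (\<forall>E \<in> sets M. emeasure M E < \<infinity> \<longrightarrow> (Phi M E \<rho> \<longlongrightarrow> 0) (at_right 0))"
  unfolding locally_dominating_def
proof (intro iffI ballI impI)
  fix E assume "\<forall>E\<in>sets M. emeasure M E < \<infinity> \<longrightarrow> dominating M \<rho> (indicator E)" "E \<in> sets M" "emeasure M E < \<infinity>"
  thus "(Phi M E \<rho> \<longlongrightarrow> 0) (at_right 0)" using fwd[OF assms(2)] by blast
next
  fix E assume "\<forall>E\<in>sets M. emeasure M E < \<infinity> \<longrightarrow> (Phi M E \<rho> \<longlongrightarrow> 0) (at_right 0)" "E \<in> sets M" "emeasure M E < \<infinity>"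
  thus "dominating M \<rho> (indicator E)" using bwd[OF assms(2)] by blast
qed

end
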